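(* Let $\mathfrak g$ be a nilpotent Lie algebra of nilindex $3$ (i.e. $\mathfrak g^3=0$) over a field of characteristic zero, let $\mathcal F_\bullet\mathfrak g$ be its standard filtration $\mathcal F_n\mathfrak g=\mathfrak g^n$, and let $R:\mathfrak g\to\mathfrak g$ be a Rota–Baxter operator of weight 1 preserving the filtration. Then the Rota–Baxter operator $\mathfrak R(x)=\log(\widehat{\mathcal R}(\exp(x)))$ on the group $(\mathfrak g,* )$ is given by $$\mathfrak R(x)=R(x)-\tfrac12 R([R(x),x]),\qquad x\in\mathfrak g.$$
   Context: $\mathfrak g^1=\mathfrak g$, $\mathfrak g^n=[\mathfrak g,\mathfrak g^{n-1}]$. Rota–Baxter operator of weight 1: linear $R$ with $[R(x),R(y)]=R([R(x),y]+[x,R(y)]+[x,y])$. Since $\mathfrak g$ is nilpotent, $\mathfrak g$ with the standard filtration is complete, so $\widehat{\mathfrak g}=\mathfrak g$. Filtration of $U(\mathfrak g)$: $\mathcal F_0U=U(\mathfrak g)$, $\mathcal F_nU$ spanned by $x_1\cdots x_k$ with $x_i\in\mathcal F_{n_i}\mathfrak g$, $\sum n_i\ge n$; $\widehat U(\mathfrak g)=\varprojlim U(\mathfrak g)/\mathcal F_nU(\mathfrak g)$ is a complete Hopf algebra containing $\mathfrak g$. $\mathcal R:U(\mathfrak g)\to U(\mathfrak g)$ is the linear map with $\mathcal R(1)=1$, $\mathcal R(x)=R(x)$, $\mathcal R(xh)=R(x)\mathcal R(h)-\mathcal R([R(x),h])$; it preserves the filtration and induces $\widehat{\mathcal R}$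 on $\widehat U(\mathfrak g)$. $\exp(x)=\sum_n x^n/n!$ is a bijection from $\mathfrak g$ onto the group $\mathbb G$ of nonzero group-like elements of $\widehat U(\mathfrak g)$, with inverse $\log$; $\widehat{\mathcal R}(\mathbb G)\subset\mathbb G$. The group $(\mathfrak g,* )$ is given by $x*y=\log(\exp(x)\exp(y))$, which here equals $x+y+\frac12[x,y]$. *)

theory Defs
  imports Main "HOL.Vector_Spaces" "HOL-Library.Poly_Mapping"
begin

definition lie_algebra :: "('k::field \<Rightarrow> 'g::ab_group_add \<Rightarrow> 'g) \<Rightarrow> ('g \<Rightarrow> 'g \<Rightarrow> 'g) \<Rightarrow> bool" where
  "lie_algebra sc br \<longleftrightarrow> Vector_Spaces.vector_space sc
     \<and> (\<forall>x y z. br (x + y) z = br x z + br y z)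
     \<and> (\<forall>x y z. br x (y + z) = br x y + br x z)
     \<and> (\<forall>c x y. br (sc c x) y = sc c (br x y))
     \<and> (\<forall>c x y. br x (sc c y) = sc c (br x y))
     \<and> (\<forall>x. br x x = 0)
     \<and> (\<forall>x y z. br x (br y z) + br y (br z x) + br z (br x y) = 0)"

fun lcs :: "('k::field \<Rightarrow> 'g::ab_group_add \<Rightarrow> 'g) \<Rightarrow> ('g \<Rightarrow> 'g \<Rightarrow> 'g) \<Rightarrow> nat \<Rightarrow> 'g set" where
  "lcs sc br 0 = UNIV"
| "lcs sc br (Suc 0) = UNIV"
| "lcs sc br (Suc (Suc n)) = module.span sc {br x y | x y. y \<in> lcs sc br (Suc n)}"

definition rota_baxter_w1 :: "('g \<Rightarrow> 'g \<Rightarrow> 'g::ab_group_add) \<Rightarrow> ('g \<Rightarrow> 'g) \<Rightarrow> bool" where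
  "rota_baxter_w1 br R \<longleftrightarrow>
     (\<forall>x y. br (R x) (R y) = R (br (R x) y + br x (R y) + br x y))"

section \<open>Free associative algebra on the set g (finitely supported functions on words)\<close>

definition fw :: "'g list \<Rightarrow> ('g list \<Rightarrow>\<^sub>0 'k::comm_ring_1)" where
  "fw w = Poly_Mapping.single w 1"

definition fsmul :: "'k::comm_ring_1 \<Rightarrow> ('g list \<Rightarrow>\<^sub>0 'k) \<Rightarrow> ('g list \<Rightarrow>\<^sub>0 'k)" where
  "fsmul c p = Poly_Mapping.map (\<lambda>a. c * a) p"

definition fmul :: "('g list \<Rightarrow>\<^sub>0 'k::comm_ring_1) \<Rightarrow> ('g list \<Rightarrow>\<^sub>0 'k) \<Rightarrow> ('g list \<Rightarrow>\<^sub>0 'k)" where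
  "fmul p q = (\<Sum>u\<in>Poly_Mapping.keys p. \<Sum>v\<in>Poly_Mapping.keys q. Poly_Mapping.single (u @ v) (Poly_Mapping.lookup p u * Poly_Mapping.lookup q v))"

text \<open>Generators of the defining two-sided ideal: linearity of letters (giving the tensor
  algebra T(g)) and the relations x y - y x - [x,y].\<close>
definition env_gens :: "('k::field \<Rightarrow> 'g::ab_group_add \<Rightarrow> 'g) \<Rightarrow> ('g \<Rightarrow> 'g \<Rightarrow> 'g) \<Rightarrow> ('g list \<Rightarrow>\<^sub>0 'k) set" where
  "env_gens sc br =
     {fw [x + y] - fw [x] - fw [y] | x y. True}
   \<union> {fw [sc c x] - fsmul c (fw [x]) | c x. True}
   \<union> {fw [x, y] - fw [y, x] - fw [br x y] | x y. True}"

definition env_ideal :: "('k::field \<Rightarrow> 'g::ab_group_add \<Rightarrow> 'g) \<Rightarrow> ('g \<Rightarrow> 'g \<Rightarrow> 'g) \<Rightarrow> ('g list \<Rightarrow>\<^sub>0 'k) set" where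
  "env_ideal sc br = module.span fsmul
     {fmul (fmul (fw u) r) (fw v) | u v r. r \<in> env_gens sc br}"

text \<open>Preimage in the free algebra of the filtration piece F_n U(g): spanned by words
  x_1...x_k with x_i in g^(n_i) and n_1+...+n_k >= n, plus the ideal.\<close>
definition filt_words :: "('k::field \<Rightarrow> 'g::ab_group_add \<Rightarrow> 'g) \<Rightarrow> ('g \<Rightarrow> 'g \<Rightarrow> 'g) \<Rightarrow> nat \<Rightarrow> ('g list \<Rightarrow>\<^sub>0 'k) set" where
  "filt_words sc br n = module.span fsmul
     {fw w | w. \<exists>ns. length ns = length w \<and> (\<forall>i<length w. w ! i \<in> lcs sc br (ns ! i))
                   \<and> n \<le> sum_list ns}"

text \<open>p and q define the same element of U(g)/F_n U(g).\<close>
definition eq_mod :: "('k::field \<Rightarrow> 'g::ab_group_add \<Rightarrow> 'g) \<Rightarrow> ('g \<Rightarrow> 'g \<Rightarrow> 'g) \<Rightarrow> nat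
    \<Rightarrow> ('g list \<Rightarrow>\<^sub>0 'k) \<Rightarrow> ('g list \<Rightarrow>\<^sub>0 'k) \<Rightarrow> bool" where
  "eq_mod sc br n p q \<longleftrightarrow>
     (\<exists>a c. a \<in> filt_words sc br n \<and> c \<in> env_ideal sc br \<and> p - q = a + c)"

section \<open>Completion: an element of \<open>\<widehat>U(g)\<close> is represented by a sequence z with z n
  representing its image in U/F_n U. exp and log.\<close>

definition exp_seq :: "'g \<Rightarrow> nat \<Rightarrow> ('g list \<Rightarrow>\<^sub>0 'k::field_char_0)" where
  "exp_seq x n = (\<Sum>k<n. fsmul (1 / fact k) (fw (replicate k x)))"

definition log_hat :: "('k::field_char_0 \<Rightarrow> 'g::ab_group_add \<Rightarrow> 'g) \<Rightarrow> ('g \<Rightarrow> 'g \<Rightarrow> 'g)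
    \<Rightarrow> (nat \<Rightarrow> ('g list \<Rightarrow>\<^sub>0 'k)) \<Rightarrow> 'g" where
  "log_hat sc br z = (THE y. \<forall>n. eq_mod sc br n (exp_seq y n) (z n))"

text \<open>On words: R(1) = 1, R(x h) = R(x) R(h) - R([R(x), h]), where the commutator
  [R(x), y_1...y_k] is expanded (as it is in U(g)) as the sum over i of the words
  y_1...[R(x),y_i]...y_k.\<close>
fun calR_n :: "('g \<Rightarrow> 'g \<Rightarrow> 'g) \<Rightarrow> ('g \<Rightarrow> 'g) \<Rightarrow> nat \<Rightarrow> 'g list \<Rightarrow> ('g list \<Rightarrow>\<^sub>0 'k::comm_ring_1)" where
  "calR_n br R 0 w = fw []"
| "calR_n br R (Suc n) [] = fw []"
| "calR_n br R (Suc n) (x # w) =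
     fmul (fw [R x]) (calR_n br R n w)
     - (\<Sum>i<length w. calR_n br R n (w[i := br (R x) (w ! i)]))"

definition calR_word :: "('g \<Rightarrow> 'g \<Rightarrow> 'g) \<Rightarrow> ('g \<Rightarrow> 'g) \<Rightarrow> 'g list \<Rightarrow> ('g list \<Rightarrow>\<^sub>0 'k::comm_ring_1)" where
  "calR_word br R w = calR_n br R (length w) w"

definition calR :: "('g \<Rightarrow> 'g \<Rightarrow> 'g) \<Rightarrow> ('g \<Rightarrow> 'g) \<Rightarrow> ('g list \<Rightarrow>\<^sub>0 'k::comm_ring_1) \<Rightarrow> ('g list \<Rightarrow>\<^sub>0 'k)" where
  "calR br R p = (\<Sum>w\<in>Poly_Mapping.keys p. fsmul (Poly_Mapping.lookup p w) (calR_word br R w))"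

definition calR_hat :: "('g \<Rightarrow> 'g \<Rightarrow> 'g) \<Rightarrow> ('g \<Rightarrow> 'g)
    \<Rightarrow> (nat \<Rightarrow> ('g list \<Rightarrow>\<^sub>0 'k::comm_ring_1)) \<Rightarrow> (nat \<Rightarrow> ('g list \<Rightarrow>\<^sub>0 'k))" where
  "calR_hat br R z = (\<lambda>n. calR br R (z n))"

end

theory Submission
  imports Defs
begin

lemma lookup_fsmul[simp]: "Poly_Mapping.lookup (fsmul c p) w = c * Poly_Mapping.lookup p w"
  unfolding fsmul_def by (simp add: Poly_Mapping.map.rep_eq when_def)

lemma lookup_fw: "Poly_Mapping.lookup (fw w :: 'g list \<Rightarrow>\<^sub>0 'k::comm_ring_1) v = (if v = w then 1 else 0)"
  unfolding fw_def by (simp add: lookup_single when_def)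

lemma keys_fw[simp]: "Poly_Mapping.keys (fw w :: 'g list \<Rightarrow>\<^sub>0 'k::comm_ring_1) = {w}"
  unfolding fw_def by simp

lemma fsmul_fw: "fsmul c (fw w) = Poly_Mapping.single w c"
  by (rule poly_mapping_eqI) (simp add: lookup_fw lookup_single when_def)

lemma fsmul_module: "module (fsmul :: 'k::comm_ring_1 \<Rightarrow> ('g list \<Rightarrow>\<^sub>0 'k) \<Rightarrow> _)"
  by unfold_locales (auto intro!: poly_mapping_eqI simp: lookup_add algebra_simps)

definition lext :: "('k::comm_ring_1 \<Rightarrow> 'b \<Rightarrow> 'b) \<Rightarrow> ('g list \<Rightarrow> 'b) \<Rightarrow> ('g list \<Rightarrow>\<^sub>0 'k) \<Rightarrow> 'b::ab_group_add" where
  "lext S f p = (\<Sum>w\<in>Poly_Mapping.keys p. S (Poly_Mapping.lookup p w) (f w))"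

lemma lext_superset:
  assumes "module S" "finite K" "Poly_Mapping.keys p \<subseteq> K"
  shows "lext S f p = (\<Sum>w\<in>K. S (Poly_Mapping.lookup p w) (f w))"
proof -
  interpret module S by fact
  show ?thesis unfolding lext_def
    by (rule sum.mono_neutral_left) (use assms in \<open>auto simp: in_keys_iff\<close>)
qed

lemma lext_hom:
  fixes f :: "'g list \<Rightarrow> 'b::ab_group_add" and S :: "'a::comm_ring_1 \<Rightarrow> 'b \<Rightarrow> 'b"
  assumes "module S"
  shows "module_hom fsmul S (lext S f)"
proof -
  interpret S: module S by fact
  interpret F: module fsmul by (rule fsmul_module)
  show ?thesis
  proof (unfold_locales)
    fix p q :: "'g list \<Rightarrow>\<^sub>0 'a"
    let ?K = "Poly_Mapping.keys p \<union> Poly_Mapping.keys q"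
    have "lext S f (p + q) = (\<Sum>w\<in>?K. S (Poly_Mapping.lookup (p+q) w) (f w))"
      by (rule lext_superset[OF assms]) (use keys_add[of p q] in auto)
    also have "\<dots> = (\<Sum>w\<in>?K. S (Poly_Mapping.lookup p w) (f w)) + (\<Sum>w\<in>?K. S (Poly_Mapping.lookup q w) (f w))"
      by (simp add: lookup_add S.scale_left_distrib sum.distrib)
    also have "\<dots> = lext S f p + lext S f q"
      by (subst (1 2) lext_superset[OF assms]) auto
    finally show "lext S f (p + q) = lext S f p + lext S f q" .
  next
    fix c and p :: "'g list \<Rightarrow>\<^sub>0 'a"
    have "lext S f (fsmul c p) = (\<Sum>w\<in>Poly_Mapping.keys p. S (Poly_Mapping.lookup (fsmul c p) w) (f w))"
      by (rule lext_superset[OF assms]) (auto simp: in_keys_iff)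
    also have "\<dots> = S c (lext S f p)"
      by (simp add: lext_def S.scale_sum_right)
    finally show "lext S f (fsmul c p) = S c (lext S f p)" .
  qed
qed

lemma lext_fw[simp]: "module S \<Longrightarrow> lext S f (fw w) = f w"
  unfolding lext_def by (simp add: lookup_fw module.scale_one)

lemma lext_compose:
  assumes "module_hom fsmul S F"
  shows "F (lext fsmul h p) = lext S (\<lambda>w. F (h w)) p"
proof -
  interpret module_hom fsmul S F by fact
  show ?thesis unfolding lext_def by (simp add: sum scale)
qed

lemma lext_cong: "(\<And>w. f w = g w) \<Longrightarrow> lext S f p = lext S g p"
  by (simp add: lext_def)

lemma lext_sum: "module S \<Longrightarrow> lext S f (sum g A) = (\<Sum>a\<in>A. lext S f (g a))"
  using module_hom.sum[OF lext_hom] by blast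

lemma lext_scale: "module S \<Longrightarrow> lext S f (fsmul c p) = S c (lext S f p)"
  using module_hom.scale[OF lext_hom] by blast

lemma fmul_left: "fmul (fw u) p = lext fsmul (\<lambda>w. fw (u @ w)) p"
  unfolding fmul_def lext_def by (simp add: lookup_fw fsmul_fw)

lemma fmul_right: "fmul p (fw v) = lext fsmul (\<lambda>w. fw (w @ v)) p"
  unfolding fmul_def lext_def by (simp add: lookup_fw fsmul_fw)

lemma lext_fsmul_fw: "lext fsmul fw p = p"
proof -
  have "lext fsmul fw p = (\<Sum>w\<in>Poly_Mapping.keys p. Poly_Mapping.single w (Poly_Mapping.lookup p w))"
    unfolding lext_def by (simp add: fsmul_fw)
  also have "\<dots> = p"
    by (rule poly_mapping_eqI) (auto simp: lookup_sum lookup_single when_def in_keys_iff)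
  finally show ?thesis .
qed


lemma fmul_sandwich:
  fixes u v :: "'g list" and g :: "'g list \<Rightarrow>\<^sub>0 'k::comm_ring_1"
  shows "fmul (fmul (fw u) g) (fw v) = lext fsmul (\<lambda>w. fw (u @ w @ v)) g"
proof -
  have h: "module_hom fsmul fsmul (lext fsmul (\<lambda>w. fw (w @ v)) :: ('g list \<Rightarrow>\<^sub>0 'k::comm_ring_1) \<Rightarrow> _)"
    by (rule lext_hom[OF fsmul_module])
  show ?thesis
    unfolding fmul_right fmul_left lext_compose[OF h]
    by (simp add: lext_fw[OF fsmul_module])
qed

datatype tg = TX | TC | TZ

definition cnt :: "tg \<Rightarrow> tg list \<Rightarrow> nat" where "cnt t ts = length (filter ((=) t) ts)"

definition nt :: "tg \<Rightarrow> tg \<Rightarrow> tg" where "nt t t' = (if t = TX \<and> t' = TX then TC else TZ)"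

lemma cnt_Cons[simp]: "cnt t (t' # ts) = (if t = t' then Suc (cnt t ts) else cnt t ts)"
  by (simp add: cnt_def)

lemma cnt_Nil[simp]: "cnt t [] = 0" by (simp add: cnt_def)

lemma cnt_upd_X:
  "i < length ts \<Longrightarrow> ts ! i = TX \<Longrightarrow>
    cnt TX (ts[i := TC]) = cnt TX ts - 1 \<and> cnt TC (ts[i := TC]) = Suc (cnt TC ts) \<and> cnt TX ts \<ge> 1"
proof (induction ts arbitrary: i)
  case Nil then show ?case by simp
next
  case (Cons t ts)
  show ?case
  proof (cases i)
    case 0 then show ?thesis using Cons by simp
  next
    case (Suc j) then show ?thesis using Cons.IH[of j] Cons.prems by auto
  qed
qed

lemma TZ_upd:
  assumes "i < length ts" "TZ \<in> set ts \<or> t \<noteq> TX"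
  shows "TZ \<in> set (ts[i := nt t (ts ! i)])"
proof (cases "t = TX")
  case False then show ?thesis using assms by (simp add: nt_def set_update_memI)
next
  case True
  with assms obtain j where j: "j < length ts" "ts ! j = TZ" by (auto simp: in_set_conv_nth)
  show ?thesis
  proof (cases "j = i")
    case True then show ?thesis using j assms by (simp add: nt_def set_update_memI)
  next
    case False then show ?thesis using j assms
      by (auto simp: in_set_conv_nth nth_list_update intro!: exI[of _ j])
  qed
qed

lemma sum_cnt:
  fixes P :: "'g list \<Rightarrow>\<^sub>0 'k::comm_ring_1"
  shows "(\<Sum>i<length ts. if ts ! i = TX then P else 0) = fsmul (of_nat (cnt TX ts)) P"
proof (induction ts)
  case Nil then show ?case by (simp add: module.scale_zero_left[OF fsmul_module])
next
  case (Cons t ts)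
  have "(\<Sum>i<length (t # ts). if (t # ts) ! i = TX then P else 0)
      = (if t = TX then P else 0) + (\<Sum>i<length ts. if ts ! i = TX then P else 0)"
    unfolding length_Cons sum.lessThan_Suc_shift by simp
  then show ?case using Cons
    by (simp add: module.scale_left_distrib[OF fsmul_module] module.scale_one[OF fsmul_module])
qed

definition lmul :: "'g list \<Rightarrow> ('g list \<Rightarrow>\<^sub>0 'k::comm_ring_1) \<Rightarrow> ('g list \<Rightarrow>\<^sub>0 'k)" where
  "lmul u = lext fsmul (\<lambda>w. fw (u @ w))"

lemma lmul_hom: "module_hom fsmul fsmul (lmul u)"
  unfolding lmul_def by (rule lext_hom[OF fsmul_module])

lemma lmul_fw[simp]: "lmul u (fw w) = fw (u @ w)"
  unfolding lmul_def by (simp add: lext_fw[OF fsmul_module])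

lemma fmul_lmul: "fmul (fw u) p = lmul u p"
  unfolding lmul_def fmul_left ..

definition gam :: "nat \<Rightarrow> nat \<Rightarrow> 'k::field_char_0" where
  "gam j m = (- 1 / 2) ^ m / (fact j * fact m)"

lemma gam_Suc_j: "of_nat (Suc j) * gam (Suc j) m = gam j m"
proof -
  have "(fact (Suc j) :: 'a) = of_nat (Suc j) * fact j" by (simp only: fact_Suc of_nat_mult)
  moreover have "(of_nat (Suc j) :: 'a) \<noteq> 0" by (rule of_nat_neq_0)
  ultimately show ?thesis unfolding gam_def by (simp add: field_simps del: of_nat_Suc)
qed

lemma gam_Suc_m: "gam j m = - 2 * of_nat (Suc m) * (gam j (Suc m) :: 'k::field_char_0)"
proof -
  have "(fact (Suc m) :: 'k) = of_nat (Suc m) * fact m" by (simp only: fact_Suc of_nat_mult)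
  moreover have "(of_nat (Suc m) :: 'k) \<noteq> 0" by (rule of_nat_neq_0)
  ultimately show ?thesis unfolding gam_def by (simp add: field_simps del: of_nat_Suc)
qed

locale RB =
  fixes sc :: "'k::field_char_0 \<Rightarrow> 'g::ab_group_add \<Rightarrow> 'g"
    and br :: "'g \<Rightarrow> 'g \<Rightarrow> 'g"
    and R :: "'g \<Rightarrow> 'g"
    and x :: 'g
  assumes lie: "lie_algebra sc br"
    and nil: "lcs sc br 3 = {0}"
    and lin: "Vector_Spaces.linear sc sc R"
    and filt: "\<forall>n. R ` lcs sc br n \<subseteq> lcs sc br n"
begin

sublocale V: vector_space sc using lie by (simp add: lie_algebra_def)

sublocale F: module "fsmul :: 'k \<Rightarrow> ('g list \<Rightarrow>\<^sub>0 'k) \<Rightarrow> _" by (rule fsmul_module)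

lemma br_addl: "br (a + b) c = br a c + br b c" using lie by (simp add: lie_algebra_def)
lemma br_addr: "br a (b + c) = br a b + br a c" using lie by (simp add: lie_algebra_def)
lemma br_scl: "br (sc k a) b = sc k (br a b)" using lie by (simp add: lie_algebra_def)
lemma br_scr: "br a (sc k b) = sc k (br a b)" using lie by (simp add: lie_algebra_def)
lemma br_self: "br a a = 0" using lie by (simp add: lie_algebra_def)
lemma br_0l[simp]: "br 0 a = 0" using br_addl[of 0 0 a] by simp
lemma br_0r[simp]: "br a 0 = 0" using br_addr[of a 0 0] by simp
lemma br_anti: "br a b = - br b a"
proof -
  have "0 = br (a + b) (a + b)" by (simp add: br_self)
  also have "\<dots> = br a b + br b a" unfolding br_addl br_addr by (simp add: br_self)
  finally show ?thesis by (metis eq_neg_iff_add_eq_0)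
qed

lemma R0[simp]: "R 0 = 0"
  using lin by (simp add: linear_iff_module_hom module_hom.zero)

lemma lcs2_r: "y \<in> lcs sc br 2 \<Longrightarrow> br a y = 0"
proof -
  assume "y \<in> lcs sc br 2"
  hence "br a y \<in> lcs sc br 3"
    by (simp add: numeral_3_eq_3 numeral_2_eq_2) (intro V.span_base, auto)
  thus ?thesis using nil by simp
qed

lemma lcs2_l: "y \<in> lcs sc br 2 \<Longrightarrow> br y a = 0"
  using lcs2_r[of y a] br_anti[of y a] by simp

lemma lcs_Suc: "lcs sc br (Suc n) \<subseteq> lcs sc br n"
proof (induction n rule: nat_less_induct)
  case (1 n)
  show ?case
  proof (cases n)
    case 0 then show ?thesis by simp
  next
    case (Suc m)
    show ?thesis
    proof (cases m)
      case 0 then show ?thesis using Suc by simp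
    next
      case (Suc k)
      have IH: "lcs sc br (Suc (Suc k)) \<subseteq> lcs sc br (Suc k)" proof -
        have "Suc k < n" using \<open>n = Suc m\<close> Suc by simp
        then show ?thesis using 1 by blast
      qed
      have e1: "lcs sc br (Suc (Suc (Suc k))) = V.span {br a b | a b. b \<in> lcs sc br (Suc (Suc k))}" by simp
      have e2: "lcs sc br (Suc (Suc k)) = V.span {br a b | a b. b \<in> lcs sc br (Suc k)}" by simp
      have "V.span {br a b | a b. b \<in> lcs sc br (Suc (Suc k))} \<subseteq> V.span {br a b | a b. b \<in> lcs sc br (Suc k)}"
        by (rule V.span_mono) (use IH in blast)
      then show ?thesis using \<open>n = Suc m\<close> Suc e1 e2 by simp
    qed
  qed
qed

lemma lcs_anti: "m \<le> n \<Longrightarrow> lcs sc br n \<subseteq> lcs sc br m"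
  by (induction n rule: dec_induct) (use lcs_Suc in auto)

abbreviation "II \<equiv> env_ideal sc br"

lemma II_span: "II = F.span {fmul (fmul (fw u) r) (fw v) | u v r. r \<in> env_gens sc br}"
  by (simp add: env_ideal_def)

lemma sand_in: "g \<in> env_gens sc br \<Longrightarrow> lext fsmul (\<lambda>w. fw (u @ w @ v)) g \<in> II"
  unfolding II_span fmul_sandwich[symmetric] by (intro F.span_base) blast

lemma lext_F_diff: "lext fsmul f (p - q) = lext fsmul f p - lext fsmul f q"
  using module_hom.diff[OF lext_hom[OF fsmul_module]] .

lemma word_add: "fw (u @ [a + b] @ v) - fw (u @ [a] @ v) - fw (u @ [b] @ v) \<in> II"
proof -
  have "fw [a + b] - fw [a] - fw [b] \<in> env_gens sc br" unfolding env_gens_def by blast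
  from sand_in[OF this, of u v] show ?thesis by (simp add: lext_F_diff lext_fw[OF fsmul_module])
qed

lemma word_scale: "fw (u @ [sc c a] @ v) - fsmul c (fw (u @ [a] @ v)) \<in> II"
proof -
  have "fw [sc c a] - fsmul c (fw [a]) \<in> env_gens sc br" unfolding env_gens_def by blast
  from sand_in[OF this, of u v] show ?thesis
    by (simp add: lext_F_diff lext_fw[OF fsmul_module] module_hom.scale[OF lext_hom[OF fsmul_module]])
qed

lemma word_swap: "fw (u @ [a, b] @ v) - fw (u @ [b, a] @ v) - fw (u @ [br a b] @ v) \<in> II"
proof -
  have "fw [a, b] - fw [b, a] - fw [br a b] \<in> env_gens sc br" unfolding env_gens_def by blast
  from sand_in[OF this, of u v] show ?thesis by (simp add: lext_F_diff lext_fw[OF fsmul_module])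
qed

lemma word_zero: "fw (u @ 0 # v) \<in> II"
proof -
  have "fw (u @ [0 + 0] @ v) - fw (u @ [0] @ v) - fw (u @ [0] @ v) \<in> II" by (rule word_add)
  hence "- fw (u @ [0] @ v) \<in> II" by simp
  from F.span_neg[OF this[unfolded II_span]] show ?thesis by (simp add: II_span)
qed

lemma II_sub: "F.subspace II" by (simp add: II_span)

lemma II_add: "p \<in> II \<Longrightarrow> q \<in> II \<Longrightarrow> p + q \<in> II" by (simp add: II_span F.span_add)
lemma II_diff: "p \<in> II \<Longrightarrow> q \<in> II \<Longrightarrow> p - q \<in> II" by (simp add: II_span F.span_diff)
lemma II_neg: "p \<in> II \<Longrightarrow> - p \<in> II" by (simp add: II_span F.span_neg)
lemma II_scale: "p \<in> II \<Longrightarrow> fsmul c p \<in> II" by (simp add: II_span F.span_scale)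
lemma II_zero: "0 \<in> II" by (simp add: II_span F.span_zero)
lemma II_sum: "(\<And>i. i \<in> A \<Longrightarrow> f i \<in> II) \<Longrightarrow> sum f A \<in> II" by (simp add: II_span F.span_sum)

lemma lext_I: "(\<And>w. w \<in> Poly_Mapping.keys p \<Longrightarrow> f w \<in> II) \<Longrightarrow> lext fsmul f p \<in> II"
  unfolding lext_def by (intro II_sum II_scale) auto

lemma lext_diff_fun: "lext fsmul f p - lext fsmul g p = lext fsmul (\<lambda>w. f w - g w) p"
  unfolding lext_def by (simp add: sum_subtractf[symmetric] module.scale_right_diff_distrib[OF fsmul_module])

lemma lext_cong_I: "(\<And>w. f w - g w \<in> II) \<Longrightarrow> lext fsmul f p - lext fsmul g p \<in> II"
  unfolding lext_diff_fun by (rule lext_I) auto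

lemma lmul_I:
  assumes "p \<in> II"
  shows "lext fsmul (\<lambda>w. fw (u @ w)) p \<in> II"
proof -
  let ?L = "lext fsmul (\<lambda>w. fw (u @ w)) :: ('g list \<Rightarrow>\<^sub>0 'k) \<Rightarrow> _"
  have hom: "module_hom fsmul fsmul ?L" by (rule lext_hom[OF fsmul_module])
  have sub: "F.subspace (?L -` II)"
    by (rule module_hom.subspace_vimage[OF hom II_sub])
  have "p \<in> ?L -` II"
    using assms[unfolded II_span]
  proof (induction rule: F.span_induct)
    case base show ?case using sub by (simp add: II_span vimage_def)
  next
    case (step q)
    then obtain u' v g where q: "q = fmul (fmul (fw u') g) (fw v)" and g: "g \<in> env_gens sc br" by blast
    have "?L q = lext fsmul (\<lambda>w. fw ((u @ u') @ w @ v)) g"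
      unfolding q fmul_sandwich lext_compose[OF hom] by (simp add: lext_fw[OF fsmul_module])
    then show ?case using sand_in[OF g, of "u @ u'" v] by (simp add: II_span)
  qed
  then show ?thesis by simp
qed

lemma calR_word_Cons: "calR_word br R (y # w) = fmul (fw [R y]) (calR_word br R w)
   - (\<Sum>i<length w. calR_word br R (w[i := br (R y) (w ! i)]))"
  by (simp add: calR_word_def)

definition "rr = R x"
definition "cc = br rr x"
definition "ss = R cc"

primrec tau :: "tg \<Rightarrow> 'g" where
  "tau TX = x" | "tau TC = cc" | "tau TZ = 0"

lemma cc_lcs2: "cc \<in> lcs sc br 2"
  unfolding cc_def numeral_2_eq_2 by simp (intro V.span_base, blast)

lemma ss_lcs2: "ss \<in> lcs sc br 2"
  using filt cc_lcs2 unfolding ss_def by blast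

lemma letter: "br (R (tau t)) (tau t') = tau (nt t t')"
  by (cases t; cases t') (auto simp: nt_def lcs2_r[OF cc_lcs2] lcs2_l[OF ss_lcs2] ss_def[symmetric] rr_def[symmetric] cc_def[symmetric])

definition Cw :: "nat \<Rightarrow> nat \<Rightarrow> 'g list \<Rightarrow>\<^sub>0 'k" where
  "Cw j m = fw (replicate j rr @ replicate m ss)"

definition T :: "nat \<Rightarrow> nat \<Rightarrow> nat \<Rightarrow> 'g list \<Rightarrow>\<^sub>0 'k" where
  "T a m b = (if 2 * m \<le> a then fsmul (fact a * gam (a - 2 * m) m) (Cw (a - 2 * m) (m + b)) else 0)"

definition Fv :: "nat \<Rightarrow> nat \<Rightarrow> 'g list \<Rightarrow>\<^sub>0 'k" where
  "Fv a b = (\<Sum>m<Suc a. T a m b)"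

lemma Fv_ext: "a < N \<Longrightarrow> Fv a b = (\<Sum>m<N. T a m b)"
  unfolding Fv_def by (rule sum.mono_neutral_left) (auto simp: T_def)

lemma Cw_r: "lmul [rr] (Cw j m) = Cw (Suc j) m"
  by (simp add: Cw_def)

lemma swap_sr: "fw (u @ [ss, rr] @ v) - fw (u @ [rr, ss] @ v) \<in> II"
proof -
  have "fw (u @ [ss, rr] @ v) - fw (u @ [rr, ss] @ v) - fw (u @ [br ss rr] @ v) \<in> II" by (rule word_swap)
  moreover have "fw (u @ [br ss rr] @ v) \<in> II" using word_zero[of u v] by (simp add: lcs2_l[OF ss_lcs2])
  ultimately show ?thesis using II_add by fastforce
qed

lemma swap_many: "fw (u @ ss # replicate j rr @ v) - fw (u @ replicate j rr @ ss # v) \<in> II"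
proof (induction j arbitrary: u)
  case 0 then show ?case by (simp add: II_zero)
next
  case (Suc j)
  have "fw (u @ ss # replicate (Suc j) rr @ v) - fw ((u @ [rr]) @ ss # replicate j rr @ v) \<in> II"
    using swap_sr[of u "replicate j rr @ v"] by simp
  moreover have "fw ((u @ [rr]) @ ss # replicate j rr @ v) - fw (u @ replicate (Suc j) rr @ ss # v) \<in> II"
    using Suc[of "u @ [rr]"] by simp
  ultimately show ?case using II_add by fastforce
qed

lemma Cw_s: "lmul [ss] (Cw j m) - Cw j (Suc m) \<in> II"
  using swap_many[of "[]" j "replicate m ss"] by (simp add: Cw_def)

lemma gam0: "fact j * gam j 0 = (1::'a::field_char_0)"
  unfolding gam_def by simp

lemma coef1:
  assumes "Suc J + 2 * Suc m' = Suc a"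
  shows "fact (Suc a) * gam (Suc J) (Suc m') = fact a * gam J (Suc m') - of_nat a * (fact (a - 1) * (gam (Suc J) m' :: 'a::field_char_0))"
proof -
  have a: "a > 0" using assms by simp
  have fa: "(fact a :: 'a) = of_nat a * fact (a - 1)" using fact_reduce[OF a] by simp
  have fs: "(fact (Suc a) :: 'a) = of_nat (Suc a) * fact a" by (simp only: fact_Suc of_nat_mult)
  have n: "(of_nat (Suc a) :: 'a) = of_nat (Suc J) + 2 * of_nat (Suc m')"
    using arg_cong[OF assms, of "of_nat :: nat \<Rightarrow> 'a"] by (simp only: of_nat_add of_nat_mult) simp
  show ?thesis
    unfolding fs gam_Suc_j[symmetric, of J] gam_Suc_m[of "Suc J" m'] n fa
    by (simp add: algebra_simps)
qed

lemma coef2: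
  assumes "2 * Suc m' = Suc a"
  shows "fact (Suc a) * gam 0 (Suc m') = - (of_nat a * (fact (a - 1) * (gam 0 m' :: 'a::field_char_0)))"
proof -
  have a: "a > 0" using assms by simp
  have fa: "(fact a :: 'a) = of_nat a * fact (a - 1)" using fact_reduce[OF a] by simp
  have fs: "(fact (Suc a) :: 'a) = of_nat (Suc a) * fact a" by (simp only: fact_Suc of_nat_mult)
  have n: "(of_nat (Suc a) :: 'a) = 2 * of_nat (Suc m')"
    using arg_cong[OF assms, of "of_nat :: nat \<Rightarrow> 'a"] by (simp only: of_nat_add of_nat_mult) simp
  show ?thesis
    unfolding fs gam_Suc_m[of 0 m'] n fa
    by (simp add: algebra_simps)
qed

lemma T_rec: "T (Suc a) m b = lmul [rr] (T a m b) - fsmul (of_nat a) (if m = 0 then 0 else T (a - 1) (m - 1) (Suc b))"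
proof (cases m)
  case 0
  then show ?thesis
    using gam0[of "Suc a", where 'a='k] gam0[of a, where 'a='k]
    by (simp add: T_def module_hom.scale[OF lmul_hom] Cw_r del: fact_Suc)
next
  case (Suc m')
  consider "2 * m \<le> a" | "2 * m = Suc a" | "2 * m > Suc a" by linarith
  then show ?thesis
  proof cases
    case 1
    define J where "J = a - 2 * m"
    have e1: "Suc a - 2 * m = Suc J" "a - 1 - 2 * (m - 1) = Suc J" "m - 1 + Suc b = m + b" "a - 2 * m = J"
      "2 * (m - 1) \<le> a - 1" "m - 1 = m'"
      using 1 Suc by (auto simp: J_def)
    have c: "Suc J + 2 * Suc m' = Suc a" using 1 Suc J_def by simp
    have t1: "T (Suc a) m b = fsmul (fact (Suc a) * gam (Suc J) m) (Cw (Suc J) (m + b))"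
      using 1 by (simp add: T_def e1 del: fact_Suc)
    have t2: "T a m b = fsmul (fact a * gam J m) (Cw J (m + b))"
      using 1 by (simp add: T_def e1 del: fact_Suc)
    have t3: "T (a - Suc 0) (m - Suc 0) (Suc b) = fsmul (fact (a - 1) * gam (Suc J) m') (Cw (Suc J) (m + b))"
      unfolding T_def using e1 Suc by (simp del: fact_Suc)
    have c1: "fact (Suc a) * gam (Suc J) m = fact a * gam J m - of_nat a * (fact (a - 1) * (gam (Suc J) m' :: 'k))"
      using coef1[OF c] Suc by simp
    have "m \<noteq> 0" using Suc by simp
    then show ?thesis
      by (simp add: t1 t2 t3 c1 module_hom.scale[OF lmul_hom] Cw_r F.scale_left_diff_distrib del: fact_Suc)
  next
    case 2
    have e1: "Suc a - 2 * m = 0" "a - 1 - 2 * (m - 1) = 0" "m - 1 + Suc b = m + b" "\<not> 2 * m \<le> a"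
      "2 * (m - 1) \<le> a - 1" "m - 1 = m'"
      using 2 Suc by auto
    have c: "2 * Suc m' = Suc a" using 2 Suc by simp
    have t1: "T (Suc a) m b = fsmul (fact (Suc a) * gam 0 m) (Cw 0 (m + b))"
      using 2 by (simp add: T_def e1 del: fact_Suc)
    have t2: "T a m b = 0"
      using e1 by (simp add: T_def)
    have t3: "T (a - Suc 0) (m - Suc 0) (Suc b) = fsmul (fact (a - 1) * gam 0 m') (Cw 0 (m + b))"
      unfolding T_def using e1 Suc by (simp del: fact_Suc)
    have c1: "fact (Suc a) * gam 0 m = - (of_nat a * (fact (a - 1) * (gam 0 m' :: 'k)))"
      using coef2[OF c] Suc by simp
    have "m \<noteq> 0" using Suc by simp
    then show ?thesis
      by (simp add: t1 t2 t3 c1 module_hom.zero[OF lmul_hom] del: fact_Suc)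
  next
    case 3
    then show ?thesis using Suc by (cases "a = 0") (auto simp: T_def module_hom.zero[OF lmul_hom])
  qed
qed

lemma Fv_rec: "Fv (Suc a) b = lmul [rr] (Fv a b) - fsmul (of_nat a) (Fv (a - 1) (Suc b))"
proof -
  let ?N = "Suc (Suc a)"
  have "Fv (Suc a) b = (\<Sum>m<?N. T (Suc a) m b)" by (rule Fv_ext) simp
  also have "\<dots> = (\<Sum>m<?N. lmul [rr] (T a m b)) - fsmul (of_nat a) (\<Sum>m<?N. if m = 0 then 0 else T (a - 1) (m - 1) (Suc b))"
    by (simp only: T_rec sum_subtractf F.scale_sum_right)
  also have "(\<Sum>m<?N. lmul [rr] (T a m b)) = lmul [rr] (Fv a b)"
  proof -
    have "Fv a b = (\<Sum>m<?N. T a m b)" by (rule Fv_ext) simp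
    then show ?thesis by (simp only: module_hom.sum[OF lmul_hom])
  qed
  also have "(\<Sum>m<?N. if m = 0 then 0 else T (a - 1) (m - 1) (Suc b)) = (\<Sum>m<Suc a. T (a - 1) m (Suc b))"
    by (subst sum.lessThan_Suc_shift) simp
  also have "\<dots> = Fv (a - 1) (Suc b)" by (rule Fv_ext[symmetric]) simp
  finally show ?thesis .
qed

lemma Fv_s: "lmul [ss] (Fv a b) - Fv a (Suc b) \<in> II"
proof -
  have "lmul [ss] (Fv a b) - Fv a (Suc b) = (\<Sum>m<Suc a. lmul [ss] (T a m b) - T a m (Suc b))"
    unfolding Fv_def by (simp only: module_hom.sum[OF lmul_hom] sum_subtractf)
  also have "\<dots> \<in> II"
  proof (rule II_sum)
    fix m
    show "lmul [ss] (T a m b) - T a m (Suc b) \<in> II"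
    proof (cases "2 * m \<le> a")
      case True
      have "lmul [ss] (T a m b) - T a m (Suc b) = fsmul (fact a * gam (a - 2 * m) m) (lmul [ss] (Cw (a - 2 * m) (m + b)) - Cw (a - 2 * m) (Suc (m + b)))"
        using True by (simp add: T_def module_hom.scale[OF lmul_hom] F.scale_right_diff_distrib)
      then show ?thesis using II_scale[OF Cw_s] by simp
    next
      case False then show ?thesis by (simp add: T_def module_hom.zero[OF lmul_hom] II_zero)
    qed
  qed
  finally show ?thesis .
qed

definition val :: "tg list \<Rightarrow> 'g list \<Rightarrow>\<^sub>0 'k" where
  "val ts = (if TZ \<in> set ts then 0 else Fv (cnt TX ts) (cnt TC ts))"

lemma calR_tau_Cons: "calR_word br R (map tau (t # ts)) = lmul [R (tau t)] (calR_word br R (map tau ts))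
    - (\<Sum>i<length ts. calR_word br R (map tau (ts[i := nt t (ts ! i)])))"
proof -
  have "\<And>i. i < length ts \<Longrightarrow> (map tau ts)[i := br (R (tau t)) (map tau ts ! i)] = map tau (ts[i := nt t (ts ! i)])"
    by (simp add: letter map_update)
  then show ?thesis
    by (simp add: calR_word_Cons fmul_lmul)
qed

lemma lmul_zero_I: "lmul [0] p \<in> II"
  unfolding lmul_def by (rule lext_I) (use word_zero[of "[]"] in simp)

lemma main: "calR_word br R (map tau ts) - val ts \<in> II"
proof (induction "length ts" arbitrary: ts)
  case 0
  then have "ts = []" by simp
  moreover have "Fv 0 0 = fw []"
    by (simp add: Fv_def T_def gam_def Cw_def)
  ultimately show ?case by (simp add: val_def calR_word_def II_zero)
next
  case (Suc n)
  then obtain t ts' where ts: "ts = t # ts'" and len: "length ts' = n" by (cases ts) auto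
  have IH: "\<And>us. length us = n \<Longrightarrow> calR_word br R (map tau us) - val us \<in> II" using Suc by blast
  define W where "W = lmul [R (tau t)] (val ts') - (\<Sum>i<n. val (ts'[i := nt t (ts' ! i)]))"
  have step1: "calR_word br R (map tau ts) - W \<in> II"
  proof -
    have "calR_word br R (map tau ts) - W = lmul [R (tau t)] (calR_word br R (map tau ts') - val ts')
      - (\<Sum>i<n. calR_word br R (map tau (ts'[i := nt t (ts' ! i)])) - val (ts'[i := nt t (ts' ! i)]))"
      unfolding ts W_def calR_tau_Cons len module_hom.diff[OF lmul_hom] sum_subtractf by (simp add: algebra_simps)
    also have "\<dots> \<in> II"
      by (intro II_diff II_sum lmul_I[unfolded lmul_def[symmetric]] IH) (auto simp: len)
    finally show ?thesis .
  qed
  have step2: "W - val ts \<in> II"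
  proof (cases "TZ \<in> set ts")
    case True
    have vi: "val (ts'[i := nt t (ts' ! i)]) = 0" if "i < n" for i
      using TZ_upd[of i ts' t] that True len ts by (auto simp: val_def)
    show ?thesis
    proof (cases "TZ \<in> set ts'")
      case True
      then show ?thesis using vi True \<open>TZ \<in> set ts\<close>
        by (simp add: W_def val_def module_hom.zero[OF lmul_hom] II_zero)
    next
      case False
      then have "t = TZ" using True ts by simp
      then show ?thesis using vi True
        by (simp add: W_def val_def lmul_zero_I)
    qed
  next
    case False
    then have nz: "TZ \<notin> set ts'" "t \<noteq> TZ" using ts by auto
    show ?thesis
    proof (cases t)
      case TZ then show ?thesis using nz by simp
    next
      case TC
      have vi: "val (ts'[i := nt t (ts' ! i)]) = 0" if "i < n" for i
        using TZ_upd[of i ts' t] that len TC by (auto simp: val_def)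
      have "W - val ts = lmul [ss] (Fv (cnt TX ts') (cnt TC ts')) - Fv (cnt TX ts') (Suc (cnt TC ts'))"
        using vi nz TC by (simp add: W_def val_def ts ss_def)
      then show ?thesis using Fv_s by simp
    next
      case TX
      have vi: "val (ts'[i := nt t (ts' ! i)]) = (if ts' ! i = TX then Fv (cnt TX ts' - 1) (Suc (cnt TC ts')) else 0)"
        if "i < n" for i
      proof (cases "ts' ! i = TX")
        case True
        have "set (ts'[i := TC]) \<subseteq> insert TC (set ts')" by (rule set_update_subset_insert)
        then have "TZ \<notin> set (ts'[i := TC])" using nz by auto
        then show ?thesis using True TX cnt_upd_X[of i ts'] that len by (simp add: val_def nt_def)
      next
        case False
        then show ?thesis using TX that len by (simp add: val_def nt_def set_update_memI)
      qed
      have "W = lmul [rr] (Fv (cnt TX ts') (cnt TC ts')) - fsmul (of_nat (cnt TX ts')) (Fv (cnt TX ts' - 1) (Suc (cnt TC ts')))"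
        unfolding W_def using nz TX vi sum_cnt[of ts' "Fv (cnt TX ts' - 1) (Suc (cnt TC ts'))"]
        by (simp add: val_def rr_def len)
      also have "\<dots> = val ts" using nz TX by (simp add: val_def ts Fv_rec)
      finally show ?thesis by (simp add: II_zero)
    qed
  qed
  from II_add[OF step1 step2] show ?case by simp
qed

definition "y0 = rr - sc (1/2) ss"

lemma y0_word: "fw (u @ [y0] @ v) - (fw (u @ [rr] @ v) + fsmul (- 1 / 2) (fw (u @ [ss] @ v))) \<in> II"
proof -
  have e: "y0 = rr + sc (- 1 / 2) ss" unfolding y0_def by (simp add: V.scale_minus_left)
  have "fw (u @ [y0] @ v) - fw (u @ [rr] @ v) - fw (u @ [sc (- 1 / 2) ss] @ v) \<in> II"
    unfolding e by (rule word_add)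
  moreover have "fw (u @ [sc (- 1 / 2) ss] @ v) - fsmul (- 1 / 2) (fw (u @ [ss] @ v)) \<in> II"
    by (rule word_scale)
  ultimately have "(fw (u @ [y0] @ v) - fw (u @ [rr] @ v) - fw (u @ [sc (- 1 / 2) ss] @ v))
     + (fw (u @ [sc (- 1 / 2) ss] @ v) - fsmul (- 1 / 2) (fw (u @ [ss] @ v))) \<in> II" by (rule II_add)
  then show ?thesis by (simp add: algebra_simps)
qed

lemma lmul_y0: "lmul [y0] p - (lmul [rr] p + fsmul (- 1 / 2) (lmul [ss] p)) \<in> II"
proof -
  have "lmul [rr] p + fsmul (- 1 / 2) (lmul [ss] p) = lext fsmul (\<lambda>w. fw (rr # w) + fsmul (- 1 / 2) (fw (ss # w))) p"
    unfolding lmul_def lext_def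
    by (simp only: sum.distrib F.scale_sum_right F.scale_right_distrib F.scale_scale mult.commute append_Cons append_Nil)
  then show ?thesis unfolding lmul_def
    using lext_cong_I[of "\<lambda>w. fw (y0 # w)" "\<lambda>w. fw (rr # w) + fsmul (- 1 / 2) (fw (ss # w))" p]
      y0_word[of "[]"] by simp
qed

definition ce :: "nat \<Rightarrow> nat \<Rightarrow> 'k" where
  "ce k m = of_nat (k choose m) * (- 1 / 2) ^ m"

definition E :: "nat \<Rightarrow> 'g list \<Rightarrow>\<^sub>0 'k" where
  "E k = (\<Sum>m<Suc k. fsmul (ce k m) (Cw (k - m) m))"

lemma E_ext: "k < N \<Longrightarrow> E k = (\<Sum>m<N. fsmul (ce k m) (Cw (k - m) m))"
  unfolding E_def by (rule sum.mono_neutral_left) (auto simp: ce_def binomial_eq_0)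

lemma E_pt: "fsmul (ce (Suc k) m) (Cw (Suc k - m) m)
   = lmul [rr] (fsmul (ce k m) (Cw (k - m) m)) + fsmul (- 1 / 2) (if m = 0 then 0 else fsmul (ce k (m - 1)) (Cw (k - (m - 1)) m))"
proof (cases m)
  case 0 then show ?thesis by (simp add: ce_def module_hom.scale[OF lmul_hom] Cw_r)
next
  case (Suc m')
  consider "m \<le> k" | "m = Suc k" | "m > Suc k" by linarith
  then show ?thesis
  proof cases
    case 1
    have e: "Suc k - m = Suc (k - m)" "k - (m - 1) = Suc (k - m)" using 1 Suc by auto
    have c: "ce (Suc k) m = ce k m + (- 1 / 2) * ce k (m - 1)"
      using Suc by (simp add: ce_def algebra_simps)
    have "m \<noteq> 0" using Suc by simp
    then show ?thesis by (simp only: e c module_hom.scale[OF lmul_hom] Cw_r F.scale_left_distrib F.scale_scale if_False)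
  next
    case 2
    have e: "Suc k - m = 0" "k - (m - 1) = 0" using 2 by auto
    have c: "ce (Suc k) m = (- 1 / 2) * ce k (m - 1)" "ce k m = 0"
      using 2 by (simp_all add: ce_def)
    have "m \<noteq> 0" using Suc by simp
    then show ?thesis by (simp add: e c module_hom.scale[OF lmul_hom] Cw_r module_hom.zero[OF lmul_hom])
  next
    case 3
    have c: "ce (Suc k) m = 0" "ce k m = 0" "ce k (m - Suc 0) = 0"
      using 3 by (simp_all add: ce_def binomial_eq_0)
    have "m \<noteq> 0" using Suc by simp
    then show ?thesis by (simp add: c module_hom.scale[OF lmul_hom] module_hom.zero[OF lmul_hom])
  qed
qed

lemma E_rec: "lmul [rr] (E k) + fsmul (- 1 / 2) (lmul [ss] (E k)) - E (Suc k) \<in> II"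
proof -
  let ?N = "Suc (Suc k)"
  define E' where "E' = (\<Sum>m<Suc k. fsmul (ce k m) (Cw (k - m) (Suc m)))"
  have d1: "lmul [ss] (E k) - E' \<in> II"
  proof -
    have "lmul [ss] (E k) - E' = (\<Sum>m<Suc k. fsmul (ce k m) (lmul [ss] (Cw (k - m) m) - Cw (k - m) (Suc m)))"
      unfolding E_def E'_def
      by (simp only: module_hom.sum[OF lmul_hom] module_hom.scale[OF lmul_hom] sum_subtractf F.scale_right_diff_distrib)
    also have "\<dots> \<in> II" by (intro II_sum II_scale Cw_s)
    finally show ?thesis .
  qed
  have E'_eq: "E' = (\<Sum>m<?N. if m = 0 then 0 else fsmul (ce k (m - 1)) (Cw (k - (m - 1)) m))"
    unfolding E'_def by (subst sum.lessThan_Suc_shift) simp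
  have ex: "E (Suc k) = lmul [rr] (E k) + fsmul (- 1 / 2) E'"
  proof -
    have "E (Suc k) = (\<Sum>m<?N. fsmul (ce (Suc k) m) (Cw (Suc k - m) m))" by (rule E_ext) simp
    also have "\<dots> = (\<Sum>m<?N. lmul [rr] (fsmul (ce k m) (Cw (k - m) m))) + fsmul (- 1 / 2) E'"
      unfolding E_pt E'_eq by (simp only: sum.distrib F.scale_sum_right)
    also have "(\<Sum>m<?N. lmul [rr] (fsmul (ce k m) (Cw (k - m) m))) = lmul [rr] (E k)"
    proof -
      have "E k = (\<Sum>m<?N. fsmul (ce k m) (Cw (k - m) m))" by (rule E_ext) simp
      then show ?thesis by (simp only: module_hom.sum[OF lmul_hom])
    qed
    finally show ?thesis .
  qed
  have "lmul [rr] (E k) + fsmul (- 1 / 2) (lmul [ss] (E k)) - E (Suc k) = fsmul (- 1 / 2) (lmul [ss] (E k) - E')"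
    unfolding ex by (simp add: F.scale_right_diff_distrib)
  then show ?thesis using II_neg[OF II_scale[OF d1]] by simp
qed

lemma rep_y0: "fw (replicate k y0) - E k \<in> II"
proof (induction k)
  case 0 then show ?case by (simp add: E_def ce_def Cw_def II_zero)
next
  case (Suc k)
  have "fw (replicate (Suc k) y0) = lmul [y0] (fw (replicate k y0))" by simp
  have a: "lmul [y0] (fw (replicate k y0)) - lmul [y0] (E k) \<in> II"
    using lmul_I[OF Suc, of "[y0]"] unfolding lmul_def by (simp add: lext_F_diff)
  have "(lmul [y0] (fw (replicate k y0)) - lmul [y0] (E k))
     + (lmul [y0] (E k) - (lmul [rr] (E k) + fsmul (- 1 / 2) (lmul [ss] (E k))))
     + (lmul [rr] (E k) + fsmul (- 1 / 2) (lmul [ss] (E k)) - E (Suc k)) \<in> II"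
    by (intro II_add a lmul_y0 E_rec)
  then show ?case by simp
qed

definition PP :: "nat \<Rightarrow> nat \<Rightarrow> 'g list \<Rightarrow>\<^sub>0 'k" where
  "PP j m = fsmul (gam j m) (Cw j m)"

lemma fin_pairs: "finite {(j, m). j + c * m < (n::nat)}" if "c > 0"
proof -
  have h: "j < n \<and> m < n" if "j + c * m < n" for j m
  proof -
    have "m \<le> c * m" using \<open>c > 0\<close> by simp
    then show ?thesis using that by linarith
  qed
  have "{(j, m). j + c * m < n} \<subseteq> {..<n} \<times> {..<n}"
    using h by auto
  then show ?thesis by (rule finite_subset) simp
qed

lemma A_eq: "(\<Sum>k<n. fsmul (1 / fact k) (Fv k 0)) = (\<Sum>(j, m) \<in> {(j, m). j + 2 * m < n}. PP j m)"
proof -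
  have "(\<Sum>k<n. fsmul (1 / fact k) (Fv k 0)) = (\<Sum>k<n. \<Sum>m<Suc k. if 2 * m \<le> k then PP (k - 2 * m) m else 0)"
    unfolding Fv_def F.scale_sum_right
    by (intro sum.cong refl) (simp add: T_def PP_def)
  also have "\<dots> = (\<Sum>(k, m) \<in> Sigma {..<n} (\<lambda>k. {..<Suc k}). if 2 * m \<le> k then PP (k - 2 * m) m else 0)"
    by (rule sum.Sigma) auto
  also have "\<dots> = (\<Sum>(k, m) \<in> {(k, m). k < n \<and> 2 * m \<le> k}. PP (k - 2 * m) m)"
    by (rule sum.mono_neutral_cong_right) (auto split: if_splits)
  also have "\<dots> = (\<Sum>(j, m) \<in> {(j, m). j + 2 * m < n}. PP j m)"
    by (rule sum.reindex_bij_witness[where i = "\<lambda>(j, m). (j + 2 * m, m)" and j = "\<lambda>(k, m). (k - 2 * m, m)"]) auto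
  finally show ?thesis .
qed

lemma B_eq: "(\<Sum>k<n. fsmul (1 / fact k) (E k)) = (\<Sum>(j, m) \<in> {(j, m). j + 1 * m < n}. PP j m)"
proof -
  have co: "ce k m / fact k = gam (k - m) m" if "m \<le> k" for k m
    unfolding ce_def gam_def binomial_fact[OF that] by (simp add: field_simps)
  have "(\<Sum>k<n. fsmul (1 / fact k) (E k)) = (\<Sum>k<n. \<Sum>m<Suc k. PP (k - m) m)"
    unfolding E_def F.scale_sum_right
    by (intro sum.cong refl) (simp add: PP_def co)
  also have "\<dots> = (\<Sum>(k, m) \<in> Sigma {..<n} (\<lambda>k. {..<Suc k}). PP (k - m) m)"
    by (rule sum.Sigma) auto
  also have "\<dots> = (\<Sum>(j, m) \<in> {(j, m). j + 1 * m < n}. PP j m)"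
    by (rule sum.reindex_bij_witness[where i = "\<lambda>(j, m). (j + m, m)" and j = "\<lambda>(k, m). (k - m, m)"]) auto
  finally show ?thesis .
qed

abbreviation "FF n \<equiv> filt_words sc br n"

lemma FF_span: "FF n = F.span {fw w | w. \<exists>ns. length ns = length w \<and> (\<forall>i<length w. w ! i \<in> lcs sc br (ns ! i)) \<and> n \<le> sum_list ns}"
  by (simp add: filt_words_def)

lemma Cw_FF: "n \<le> j + 2 * m \<Longrightarrow> Cw j m \<in> FF n"
  unfolding FF_span Cw_def
proof (intro F.span_base CollectI exI conjI)
  show "fw (replicate j rr @ replicate m ss) = fw (replicate j rr @ replicate m ss)" ..
  show "length (replicate j (1::nat) @ replicate m 2) = length (replicate j rr @ replicate m ss)" by simp
  show "\<forall>i<length (replicate j rr @ replicate m ss). (replicate j rr @ replicate m ss) ! i \<in> lcs sc br ((replicate j 1 @ replicate m 2) ! i)"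
    using ss_lcs2 by (auto simp: nth_append)
  assume "n \<le> j + 2 * m"
  then show "n \<le> sum_list (replicate j 1 @ replicate m (2::nat))" by (simp add: sum_list_replicate)
qed

lemma BA_FF: "(\<Sum>k<n. fsmul (1 / fact k) (E k)) - (\<Sum>k<n. fsmul (1 / fact k) (Fv k 0)) \<in> FF n"
proof -
  let ?T2 = "{(j, m). j + 1 * m < n}" and ?T1 = "{(j, m). j + 2 * m < n}"
  have sub: "?T1 \<subseteq> ?T2" by auto
  have "(\<Sum>(j, m) \<in> ?T2. PP j m) = (\<Sum>(j, m) \<in> ?T2 - ?T1. PP j m) + (\<Sum>(j, m) \<in> ?T1. PP j m)"
    by (rule sum.subset_diff[OF sub fin_pairs]) simp
  then have "(\<Sum>k<n. fsmul (1 / fact k) (E k)) - (\<Sum>k<n. fsmul (1 / fact k) (Fv k 0)) = (\<Sum>(j, m) \<in> ?T2 - ?T1. PP j m)"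
    unfolding A_eq B_eq by simp
  also have "\<dots> \<in> FF n"
    unfolding FF_span
    by (rule F.span_sum) (auto simp: PP_def intro!: F.span_scale Cw_FF[unfolded FF_span])
  finally show ?thesis .
qed

lemma calR_lext: "calR br R p = lext fsmul (calR_word br R) p"
  by (simp add: calR_def lext_def)

lemma cnt_rep: "cnt t (replicate k t) = k" "t \<noteq> t' \<Longrightarrow> cnt t' (replicate k t) = 0"
  by (simp_all add: cnt_def)

lemma calR_rep: "calR_word br R (replicate k x) - Fv k 0 \<in> II"
proof -
  have "replicate k x = map tau (replicate k TX)" by simp
  moreover have "val (replicate k TX) = Fv k 0" by (simp add: val_def cnt_rep)
  ultimately show ?thesis using main[of "replicate k TX"] by simp
qed

lemma exp_calR: "calR br R (exp_seq x n) - (\<Sum>k<n. fsmul (1 / fact k) (Fv k 0)) \<in> II"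
proof -
  have hom: "module_hom fsmul fsmul (lext fsmul (calR_word br R) :: ('g list \<Rightarrow>\<^sub>0 'k) \<Rightarrow> _)"
    by (rule lext_hom[OF fsmul_module])
  have "calR br R (exp_seq x n) = (\<Sum>k<n. fsmul (1 / fact k) (calR_word br R (replicate k x)))"
    unfolding calR_lext exp_seq_def
    by (simp add: lext_sum[OF fsmul_module] lext_scale[OF fsmul_module] lext_fw[OF fsmul_module])
  then have "calR br R (exp_seq x n) - (\<Sum>k<n. fsmul (1 / fact k) (Fv k 0))
     = (\<Sum>k<n. fsmul (1 / fact k) (calR_word br R (replicate k x) - Fv k 0))"
    by (simp add: sum_subtractf F.scale_right_diff_distrib)
  also have "\<dots> \<in> II" by (intro II_sum II_scale calR_rep)
  finally show ?thesis .
qed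

lemma exp_y0: "exp_seq y0 n - (\<Sum>k<n. fsmul (1 / fact k) (E k)) \<in> II"
proof -
  have "exp_seq y0 n - (\<Sum>k<n. fsmul (1 / fact k) (E k))
     = (\<Sum>k<n. fsmul (1 / fact k) (fw (replicate k y0) - E k))"
    unfolding exp_seq_def by (simp add: sum_subtractf F.scale_right_diff_distrib)
  also have "\<dots> \<in> II" by (intro II_sum II_scale rep_y0)
  finally show ?thesis .
qed

lemma existence: "eq_mod sc br n (exp_seq y0 n) (calR br R (exp_seq x n))"
proof -
  let ?A = "\<Sum>k<n. fsmul (1 / fact k) (Fv k 0)" and ?B = "\<Sum>k<n. fsmul (1 / fact k) (E k)"
  have "exp_seq y0 n - calR br R (exp_seq x n) = (?B - ?A) + ((exp_seq y0 n - ?B) - (calR br R (exp_seq x n) - ?A))"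
    by simp
  moreover have "(exp_seq y0 n - ?B) - (calR br R (exp_seq x n) - ?A) \<in> II"
    by (intro II_diff exp_y0 exp_calR)
  ultimately show ?thesis unfolding eq_mod_def using BA_FF by blast
qed

fun psw :: "'g list \<Rightarrow> 'g" where
  "psw [a] = a"
| "psw [a, b] = sc (1/2) (br a b)"
| "psw _ = 0"

lemma sc_module: "module sc"
  by (simp add: module_iff_vector_space V.vector_space_axioms)

definition psi :: "('g list \<Rightarrow>\<^sub>0 'k) \<Rightarrow> 'g" where
  "psi = lext sc psw"

lemma psi_hom: "module_hom fsmul sc psi"
  unfolding psi_def by (rule lext_hom[OF sc_module])

lemma psi_fw[simp]: "psi (fw w) = psw w"
  unfolding psi_def by (rule lext_fw[OF sc_module])

lemma psw_3[simp]: "psw (a # b # w) = (if w = [] then sc (1/2) (br a b) else 0)"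
  by (cases w) auto

lemma psw_mid: "psw (u @ [a] @ v) = (if u = [] \<and> v = [] then a
   else if u = [] \<and> length v = 1 then sc (1/2) (br a (hd v))
   else if length u = 1 \<and> v = [] then sc (1/2) (br (hd u) a) else 0)"
proof (cases u)
  case Nil then show ?thesis
    by (cases v rule: psw.cases) auto
next
  case (Cons p u')
  then show ?thesis by (cases u'; cases v) auto
qed

lemma psw_long: "3 \<le> length w \<Longrightarrow> psw w = 0"
  by (cases w rule: psw.cases) auto

lemma psw_mid2: "psw (u @ [a, b] @ v) = (if u = [] \<and> v = [] then sc (1/2) (br a b) else 0)"
proof (cases "u = [] \<and> v = []")
  case True then show ?thesis by simp
next
  case False
  then have "3 \<le> length (u @ [a, b] @ v)" by (cases u; cases v) auto
  from psw_long[OF this] False show ?thesis by auto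
qed

lemma psi_sand: "psi (lext fsmul (\<lambda>w. fw (u @ w @ v)) g) = lext sc (\<lambda>w. psw (u @ w @ v)) g"
  by (simp add: lext_compose[OF psi_hom])

lemma lsc_diff: "lext sc f (p - q) = lext sc f p - lext sc f q"
  using module_hom.diff[OF lext_hom[OF sc_module]] .

lemma lsc_scale: "lext sc f (fsmul c p) = sc c (lext sc f p)"
  using module_hom.scale[OF lext_hom[OF sc_module]] .

lemma half_half: "sc (1/2) z + sc (1/2) z = z"
  using V.scale_left_distrib[of "1/2" "1/2" z, symmetric] by simp

lemma psi_gens: "g \<in> env_gens sc br \<Longrightarrow> psi (lext fsmul (\<lambda>w. fw (u @ w @ v)) g) = 0"
  unfolding psi_sand env_gens_def
proof (elim UnE CollectE exE conjE)
  fix a b assume g: "g = fw [a + b] - fw [a] - fw [b]"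
  show "lext sc (\<lambda>w. psw (u @ w @ v)) g = 0"
    unfolding g lsc_diff lext_fw[OF sc_module] psw_mid
    by (simp add: br_addl br_addr V.scale_right_distrib)
next
  fix c a assume g: "g = fw [sc c a] - fsmul c (fw [a])"
  show "lext sc (\<lambda>w. psw (u @ w @ v)) g = 0"
    unfolding g lsc_diff lsc_scale lext_fw[OF sc_module] psw_mid
    by (simp add: br_scl br_scr mult.commute)
next
  fix a b assume g: "g = fw [a, b] - fw [b, a] - fw [br a b]"
  have m: "br a b \<in> lcs sc br 2" by (simp add: numeral_2_eq_2) (intro V.span_base, blast)
  have z1: "br (br a b) q = 0" "br q (br a b) = 0" for q
    using lcs2_l[OF m] lcs2_r[OF m] by auto
  have "sc (1/2) (br a b) - sc (1/2) (br b a) - br a b = 0"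
    using half_half[of "br a b"] br_anti[of b a] by (simp add: algebra_simps)
  then show "lext sc (\<lambda>w. psw (u @ w @ v)) g = 0"
    unfolding g lsc_diff lext_fw[OF sc_module] psw_mid2 psw_mid
    by (simp add: z1)
qed

lemma psi_II: "p \<in> II \<Longrightarrow> psi p = 0"
  unfolding II_span fmul_sandwich
  by (rule module_hom.eq_0_on_span[OF psi_hom]) (auto intro: psi_gens)

lemma psi_FF3: "p \<in> FF 3 \<Longrightarrow> psi p = 0"
  unfolding FF_span
proof (rule module_hom.eq_0_on_span[OF psi_hom])
  fix q :: "'g list \<Rightarrow>\<^sub>0 'k" assume "q \<in> {fw w | w. \<exists>ns. length ns = length w \<and> (\<forall>i<length w. w ! i \<in> lcs sc br (ns ! i)) \<and> 3 \<le> sum_list ns}"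
  then obtain w ns where q: "q = fw w" and l: "length ns = length w"
    and mem: "\<forall>i<length w. w ! i \<in> lcs sc br (ns ! i)" and s3: "3 \<le> sum_list ns" by blast
  have cs: "(\<exists>a. w = [a]) \<or> (\<exists>a b. w = [a, b]) \<or> w = [] \<or> 3 \<le> length w"
    by (cases w rule: psw.cases) auto
  show "psi q = 0"
  proof (cases "\<exists>a. w = [a]")
    case True
    then obtain a where 1: "w = [a]" by blast
    then obtain n0 where ns: "ns = [n0]" using l by (cases ns) auto
    then have "a \<in> lcs sc br 3" using mem 1 s3 lcs_anti[of 3 n0] by auto
    then show ?thesis using nil q 1 by simp
  next
    case F1: False
    show ?thesis
    proof (cases "\<exists>a b. w = [a, b]")
    case True
    then obtain a b where 2: "w = [a, b]" by blast
    then obtain n0 n1 where ns: "ns = [n0, n1]" using l by (cases ns; cases "tl ns") auto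
    have ma: "a \<in> lcs sc br n0" "b \<in> lcs sc br n1" using mem 2 ns by auto
    have "3 \<le> n0 + n1" using s3 ns by simp
    then have "2 \<le> n0 \<or> 2 \<le> n1" by linarith
    then have "br a b = 0"
      using ma lcs_anti[of 2 n0] lcs_anti[of 2 n1] lcs2_l[of a b] lcs2_r[of b a] by auto
    then show ?thesis using q 2 by simp
  next
    case False
    then have "w = [] \<or> 3 \<le> length w" using cs F1 by blast
    then show ?thesis using q l s3 psw_long by auto
  qed
  qed
qed

lemma psi_exp3: "psi (exp_seq y 3) = y"
  unfolding exp_seq_def module_hom.sum[OF psi_hom] module_hom.scale[OF psi_hom]
  by (simp add: numeral_3_eq_3 br_self)

lemma uniq:
  assumes "\<forall>n. eq_mod sc br n (exp_seq y n) (Z n)"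
  shows "y = psi (Z 3)"
proof -
  from assms obtain a c where "a \<in> FF 3" "c \<in> II" "exp_seq y 3 - Z 3 = a + c"
    unfolding eq_mod_def by blast
  then have "psi (exp_seq y 3 - Z 3) = 0"
    using psi_II psi_FF3 module_hom.add[OF psi_hom] by simp
  then show ?thesis using psi_exp3[of y] module_hom.diff[OF psi_hom] by simp
qed

end

theorem proposition4p15:
  fixes sc :: "'k::field_char_0 \<Rightarrow> 'g::ab_group_add \<Rightarrow> 'g"
    and br :: "'g \<Rightarrow> 'g \<Rightarrow> 'g"
    and R :: "'g \<Rightarrow> 'g"
    and x :: 'g
  assumes "lie_algebra sc br"
    and "lcs sc br 3 = {0}"
    and "Vector_Spaces.linear sc sc R"
    and "rota_baxter_w1 br R"
    and "\<forall>n. R ` lcs sc br n \<subseteq> lcs sc br n"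
  shows "log_hat sc br (calR_hat br R (exp_seq x :: nat \<Rightarrow> ('g list \<Rightarrow>\<^sub>0 'k)))
           = R x - sc (1/2) (R (br (R x) x))"
proof -
  interpret RB sc br R x using assms by (simp add: RB_def)
  have y: "R x - sc (1/2) (R (br (R x) x)) = y0" by (simp add: y0_def rr_def cc_def ss_def)
  let ?Z = "calR_hat br R (exp_seq x :: nat \<Rightarrow> ('g list \<Rightarrow>\<^sub>0 'k))"
  have P: "\<forall>n. eq_mod sc br n (exp_seq y0 n) (?Z n)"
    by (simp add: calR_hat_def existence)
  have "(THE y. \<forall>n. eq_mod sc br n (exp_seq y n) (?Z n)) = y0"
  proof (rule the_equality)
    show "\<forall>n. eq_mod sc br n (exp_seq y0 n) (?Z n)" by (rule P)
  next
    fix y assume "\<forall>n. eq_mod sc br n (exp_seq y n) (?Z n)"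
    then show "y = y0" using uniq[OF P] uniq by metis
  qed
  then show ?thesis unfolding log_hat_def y .
qed

end
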